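(* Fix $a,c\in\mathbb{C}$ with $\operatorname{Re} c>\operatorname{Re} a>0$ and $\tau,\beta>0$ with $\tau-\beta<1$. Let $\alpha\in\mathbb{C}$ with $\sigma=\operatorname{Re}\alpha>1$ and $r\in\mathbb{C}$ with $\operatorname{Re} r>0$ or $r=0$, and assume $\int_0^\infty \frac{t^{\sigma-1}e^{-t}}{1-e^{-t}}\,|\Phi^{\tau,\beta}(a;c;-r/t)|\,dt<\infty$. Then $\zeta^{2r}(\alpha)$ is defined (its integral converges absolutely) and $$\zeta^{r}(\alpha)-2^{1-\alpha}\zeta^{2r}(\alpha)=\frac{1}{\Gamma(\alpha)}\int_0^\infty\frac{t^{\alpha-1}e^{-t}}{1+e^{-t}}\,\Phi^{\tau,\beta}\Big(a;c;-\frac{r}{t}\Big)\,dt .$$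
   Context: For $\tau,\beta>0$ with $\tau-\beta<1$ and $a,c\in\mathbb{C}$, the $(\tau,\beta)$-confluent hypergeometric function is the entire function $\Phi^{\tau,\beta}(a;c;z)=\frac{\Gamma(c)}{\Gamma(a)}\sum_{n=0}^{\infty}\frac{\Gamma(a+\tau n)}{\Gamma(c+\beta n)}\frac{z^n}{n!}$ (equal, for $\operatorname{Re}c>\operatorname{Re}a>0$, to $\frac{\Gamma(c)}{\Gamma(a)\Gamma(c-a)}\int_0^1 t^{a-1}(1-t)^{c-a-1}\sum_{k\ge0}\frac{\Gamma(c+\tau k)}{\Gamma(c+\beta k)}\frac{(zt^{\tau})^k}{k!}dt$). Generalized zeta function: $\zeta^{r}(\alpha)=\frac{1}{\Gamma(\alpha)}\int_0^\infty \frac{t^{\alpha-1}e^{-t}}{1-e^{-t}}\,\Phi^{\tau,\beta}(a;c;-r/t)\,dt$ for $\operatorname{Re}\alpha>1$, $\operatorname{Re}r>0$ or $r=0$, with $a,c,\tau,\beta$ fixed. *)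

theory Defs
  imports "HOL-Analysis.Analysis"
begin

definition Phi :: "real \<Rightarrow> real \<Rightarrow> complex \<Rightarrow> complex \<Rightarrow> complex \<Rightarrow> complex" where
  "Phi tau beta a c z = Gamma c / Gamma a *
     (\<Sum>n. Gamma (a + of_real (tau * real n)) / Gamma (c + of_real (beta * real n))
            * z ^ n / of_nat (fact n))"

definition zeta_integrand ::
  "real \<Rightarrow> real \<Rightarrow> complex \<Rightarrow> complex \<Rightarrow> complex \<Rightarrow> complex \<Rightarrow> real \<Rightarrow> complex" where
  "zeta_integrand tau beta a c r alpha t =
     (of_real t) powr (alpha - 1) * of_real (exp (-t) / (1 - exp (-t)))
       * Phi tau beta a c (- r / of_real t)"

definition gzeta :: "real \<Rightarrow> real \<Rightarrow> complex \<Rightarrow> complex \<Rightarrow> complex \<Rightarrow> complex \<Rightarrow> complex" where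
  "gzeta tau beta a c r alpha =
     1 / Gamma alpha * (LINT t:{0<..}|lborel. zeta_integrand tau beta a c r alpha t)"

end

theory Submission
  imports Defs
begin

lemma Phi_meas[measurable]: "(\<lambda>z. Phi tau beta a c z) \<in> borel_measurable borel"
  unfolding Phi_def by measurable

lemma PI_meas[measurable]: "(\<lambda>t::real. indicator {0<..} t *\<^sub>R ((of_real t::complex) powr w)) \<in> borel_measurable borel"
  apply (rule borel_measurable_continuous_on_indicator) apply simp
  apply (intro continuous_intros) apply auto done

lemma AC0: fixes x::real assumes "0<x" "x<1" shows
 "x/(1-x) - 2*x^2/(1-x^2) = x/(1+x)"
proof -
  have e: "1-x^2 = (1-x)*(1+x)" by (simp add: algebra_simps power2_eq_square)
  have n: "1-x \<noteq> 0" "1+x\<noteq>0" using assms by auto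
  have a: "x/(1-x) = x*(1+x)/((1-x)*(1+x))" using n by simp
  have "x/(1-x) - 2*x^2/((1-x)*(1+x)) = (x*(1+x) - 2*x^2)/((1-x)*(1+x))"
    unfolding a by (simp add: diff_divide_distrib)
  also have "x*(1+x) - 2*x^2 = x*(1-x)" by (simp add: algebra_simps power2_eq_square)
  also have "x*(1-x)/((1-x)*(1+x)) = x/(1+x)" using n by simp
  finally show ?thesis unfolding e .
qed

lemma AC: fixes t::real assumes "t>0" shows
 "exp(-t)/(1-exp(-t)) - 2*exp(-(2*t))/(1-exp(-(2*t))) = exp(-t)/(1+exp(-t))"
proof -
  have e: "exp(-(2*t)) = exp(-t)^2" by (simp add: power2_eq_square exp_add[symmetric])
  show ?thesis unfolding e by (rule AC0) (use assms in auto)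
qed

theorem theorem2:
  fixes tau beta :: real and a c alpha r :: complex
  assumes "Re c > Re a" and "Re a > 0"
    and "tau > 0" and "beta > 0" and "tau - beta < 1"
    and "Re alpha > 1"
    and "Re r > 0 \<or> r = 0"
    and "(\<integral>\<^sup>+ t\<in>{0<..}. ennreal (t powr (Re alpha - 1) * exp (-t) / (1 - exp (-t))
              * norm (Phi tau beta a c (- r / of_real t))) \<partial>lborel) < \<infinity>"
  shows "set_integrable lborel {0<..} (zeta_integrand tau beta a c (2 * r) alpha)
    \<and> gzeta tau beta a c r alpha - 2 powr (1 - alpha) * gzeta tau beta a c (2 * r) alpha
      = 1 / Gamma alpha * (LINT t:{0<..}|lborel.
          (of_real t) powr (alpha - 1) * of_real (exp (-t) / (1 + exp (-t)))
            * Phi tau beta a c (- r / of_real t))"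
proof -
  define PI where "PI t = indicator {0<..} t *\<^sub>R ((of_real t::complex) powr (alpha - 1))" for t
  define g where "g t = Phi tau beta a c (- r / of_real t)" for t
  define A where "A t = exp(-t)/(1-exp(-t))" for t :: real
  define B where "B t = exp(-t)/(1+exp(-t))" for t :: real
  define C where "C t = 2*exp(-(2*t))/(1-exp(-(2*t)))" for t :: real
  define FA where "FA t = indicator {0<..} t *\<^sub>R zeta_integrand tau beta a c r alpha t" for t
  define FB where "FB t = indicator {0<..} t *\<^sub>R ((of_real t) powr (alpha - 1) * of_real (exp (-t) / (1 + exp (-t)))
            * Phi tau beta a c (- r / of_real t))" for t
  define FC where "FC t = PI t * (of_real (C t) * g t)" for t
  define G where "G t = indicator {0<..} t *\<^sub>R zeta_integrand tau beta a c (2*r) alpha t" for t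
  have PIm[measurable]: "PI \<in> borel_measurable borel" unfolding PI_def by measurable
  have gm[measurable]: "g \<in> borel_measurable borel" unfolding g_def by measurable
  have FA': "FA t = PI t * (of_real (A t) * g t)" for t
    by (simp add: FA_def PI_def A_def g_def zeta_integrand_def indicator_def)
  have FB': "FB t = PI t * (of_real (B t) * g t)" for t
    by (simp add: FB_def PI_def B_def g_def indicator_def)
  have FAm[measurable]: "FA \<in> borel_measurable borel" unfolding FA' A_def by measurable
  have FBm[measurable]: "FB \<in> borel_measurable borel" unfolding FB' B_def by measurable
  have FCm[measurable]: "FC \<in> borel_measurable borel" unfolding FC_def C_def by measurable
  have A_nn: "t > 0 \<Longrightarrow> A t \<ge> 0" for t unfolding A_def by simp
  have normFA: "norm (FA t) = indicator {0<..} t * (t powr (Re alpha - 1) * A t * norm (g t))" for t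
    using A_nn[of t]
    by (auto simp: FA' PI_def indicator_def norm_mult norm_powr_real_powr)
  have intA: "integrable lborel FA"
  proof (rule integrableI_bounded)
    have "(\<integral>\<^sup>+ t. ennreal (norm (FA t)) \<partial>lborel) =
      (\<integral>\<^sup>+ t\<in>{0<..}. ennreal (t powr (Re alpha - 1) * exp (-t) / (1 - exp (-t))
              * norm (Phi tau beta a c (- r / of_real t))) \<partial>lborel)"
      by (rule nn_integral_cong) (auto simp: normFA A_def g_def indicator_def)
    then show "(\<integral>\<^sup>+ t. ennreal (norm (FA t)) \<partial>lborel) < \<infinity>" using assms(8) by simp
  qed simp
  have BA: "t > 0 \<Longrightarrow> 0 \<le> B t \<and> B t \<le> A t" for t
    unfolding A_def B_def by (auto intro!: frac_le)
  have CA: "t > 0 \<Longrightarrow> 0 \<le> C t \<and> C t \<le> A t" for t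
  proof -
    assume t: "t > 0"
    have "A t - C t = B t" using AC[OF t] unfolding A_def B_def C_def by simp
    moreover have "0 \<le> C t" using t unfolding C_def by (simp add: divide_nonneg_pos)
    ultimately show ?thesis using BA[OF t] by linarith
  qed
  have intB: "integrable lborel FB"
  proof (rule Bochner_Integration.integrable_bound[OF intA], measurable, rule AE_I2)
    fix t show "norm (FB t) \<le> norm (FA t)"
      using BA[of t] A_nn[of t]
      by (auto simp: FA' FB' norm_mult PI_def indicator_def intro!: mult_left_mono mult_right_mono)
  qed
  have intC: "integrable lborel FC"
  proof (rule Bochner_Integration.integrable_bound[OF intA], measurable, rule AE_I2)
    fix t show "norm (FC t) \<le> norm (FA t)"
      using CA[of t] A_nn[of t]
      by (auto simp: FA' FC_def norm_mult PI_def indicator_def intro!: mult_left_mono mult_right_mono)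
  qed
  have FABC: "FA t - FC t = FB t" for t
    using AC[of t] unfolding FA' FB' FC_def A_def B_def C_def
    by (cases "t > 0") (auto simp: PI_def algebra_simps simp flip: of_real_diff)
  define k :: complex where "k = 2 powr (alpha - 1) / 2"
  have GC: "G (2 * t) = k * FC t" for t
  proof (cases "t > 0")
    case True
    have "(of_real (2*t)::complex) powr (alpha - 1) = 2 powr (alpha - 1) * of_real t powr (alpha - 1)"
      using True by (simp add: powr_times_real)
    moreover have "- (2 * r) / of_real (2 * t) = - r / of_real t" by simp
    ultimately show ?thesis using True
      by (simp add: G_def FC_def PI_def C_def k_def g_def zeta_integrand_def field_simps)
  next
    case False then show ?thesis by (simp add: G_def FC_def PI_def)
  qed
  have intG2: "integrable lborel (\<lambda>t. G (0 + 2 * t))" 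
  proof -
    have "(\<lambda>t. G (0 + 2 * t)) = (\<lambda>t. k * FC t)" by (simp add: GC)
    then show ?thesis using intC by simp
  qed
  have intG: "integrable lborel G"
    using lborel_integrable_real_affine_iff[of 2 G 0] intG2 by simp
  have IG: "integral\<^sup>L lborel G = 2 * k * integral\<^sup>L lborel FC"
    using lborel_integral_real_affine[of 2 G 0] by (simp add: GC scaleR_conv_of_real)
  have kk: "2 powr (1 - alpha) * (2 * k) = 1" unfolding k_def by (simp add: powr_add[symmetric])
  have IABC: "integral\<^sup>L lborel FA - integral\<^sup>L lborel FC = integral\<^sup>L lborel FB"
    using Bochner_Integration.integral_diff[OF intA intC] FABC by simp
  have "gzeta tau beta a c r alpha - 2 powr (1 - alpha) * gzeta tau beta a c (2 * r) alpha
     = 1 / Gamma alpha * (integral\<^sup>L lborel FA - 2 powr (1 - alpha) * integral\<^sup>L lborel G)"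
  proof -
    have e1: "(\<lambda>t. indicator {0<..} t *\<^sub>R zeta_integrand tau beta a c r alpha t) = FA"
      by (simp add: fun_eq_iff FA_def)
    have e2: "(\<lambda>t. indicator {0<..} t *\<^sub>R zeta_integrand tau beta a c (2*r) alpha t) = G"
      by (simp add: fun_eq_iff G_def)
    show ?thesis unfolding gzeta_def set_lebesgue_integral_def e1 e2 by (simp add: algebra_simps)
  qed
  also have "2 powr (1 - alpha) * integral\<^sup>L lborel G = integral\<^sup>L lborel FC"
    unfolding IG using kk by (simp add: mult.assoc[symmetric])
  finally have eq: "gzeta tau beta a c r alpha - 2 powr (1 - alpha) * gzeta tau beta a c (2 * r) alpha
     = 1 / Gamma alpha * integral\<^sup>L lborel FB" unfolding IABC .
  have e2: "(\<lambda>t. indicator {0<..} t *\<^sub>R zeta_integrand tau beta a c (2*r) alpha t) = G"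
    by (simp add: fun_eq_iff G_def)
  have e3: "(\<lambda>t. indicator {0<..} t *\<^sub>R ((of_real t) powr (alpha - 1) * of_real (exp (-t) / (1 + exp (-t)))
            * Phi tau beta a c (- r / of_real t))) = FB"
    by (simp add: fun_eq_iff FB_def)
  show ?thesis
    unfolding set_integrable_def set_lebesgue_integral_def e2 e3 using intG eq by simp
qed

end
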